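(* For every integer $k\ge 3$, $src^*(C_{(k-1)^2}(\{1,k\}))=rc^*(C_{(k-1)^2}(\{1,k\}))=2k-4$.
   Context: For $n\ge 2$ and $S\subseteq\{1,\dots,n-1\}$, the circulant digraph $C_n(S)$ has vertex set $\{v_0,\dots,v_{n-1}\}$ and arcs $v_iv_j$ for all $i,j$ with $j-i\equiv s \pmod n$ for some $s\in S$. For a strongly connected digraph $D$ and an arc-colouring $\Gamma:A(D)\to\{1,\dots,k\}$, a directed path is rainbow if its arcs have pairwise distinct colours. $\Gamma$ is rainbow connected if for every ordered pair of distinct vertices $x,y$ there is a rainbow directed $xy$-path; $rc^*(D)$ is the minimum number of colours of such a colouring. $\Gamma$ is strongly rainbow connected if for every ordered pair of distinct vertices $x,y$ there is a rainbow directed $xy$-path of length $d_D(x,y)$; $src^*(D)$ is the minimum such number. *)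

theory Defs
  imports Main
begin

text \<open>A digraph is given by a vertex set V and an arc predicate A.
  Arc colourings are functions on ordered pairs of vertices; only their values on arcs matter.\<close>

definition circulant_arc :: "nat \<Rightarrow> nat set \<Rightarrow> nat \<Rightarrow> nat \<Rightarrow> bool" where
  "circulant_arc n S i j \<longleftrightarrow> i < n \<and> j < n \<and> (\<exists>s\<in>S. j = (i + s) mod n)"

definition circulant_vertices :: "nat \<Rightarrow> nat set" where
  "circulant_vertices n = {..<n}"

definition dipath :: "'a set \<Rightarrow> ('a \<Rightarrow> 'a \<Rightarrow> bool) \<Rightarrow> 'a list \<Rightarrow> 'a \<Rightarrow> 'a \<Rightarrow> bool" where
  "dipath V A p x y \<longleftrightarrow> p \<noteq> [] \<and> hd p = x \<and> last p = y \<and> distinct p \<and> set p \<subseteq> V \<and>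
     (\<forall>i. i + 1 < length p \<longrightarrow> A (p ! i) (p ! (i + 1)))"

definition path_len :: "'a list \<Rightarrow> nat" where
  "path_len p = length p - 1"

definition rainbow :: "('a \<times> 'a \<Rightarrow> nat) \<Rightarrow> 'a list \<Rightarrow> bool" where
  "rainbow c p \<longleftrightarrow> distinct (map (\<lambda>i. c (p ! i, p ! (i + 1))) [0..<length p - 1])"

definition digraph_dist :: "'a set \<Rightarrow> ('a \<Rightarrow> 'a \<Rightarrow> bool) \<Rightarrow> 'a \<Rightarrow> 'a \<Rightarrow> nat" where
  "digraph_dist V A x y = (LEAST l. \<exists>p. dipath V A p x y \<and> path_len p = l)"

definition arc_colouring :: "'a set \<Rightarrow> ('a \<Rightarrow> 'a \<Rightarrow> bool) \<Rightarrow> ('a \<times> 'a \<Rightarrow> nat) \<Rightarrow> nat \<Rightarrow> bool" where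
  "arc_colouring V A c k \<longleftrightarrow> (\<forall>a\<in>V. \<forall>b\<in>V. A a b \<longrightarrow> c (a, b) \<in> {1..k})"

definition rainbow_connected :: "'a set \<Rightarrow> ('a \<Rightarrow> 'a \<Rightarrow> bool) \<Rightarrow> ('a \<times> 'a \<Rightarrow> nat) \<Rightarrow> bool" where
  "rainbow_connected V A c \<longleftrightarrow>
     (\<forall>x\<in>V. \<forall>y\<in>V. x \<noteq> y \<longrightarrow> (\<exists>p. dipath V A p x y \<and> rainbow c p))"

definition strongly_rainbow_connected :: "'a set \<Rightarrow> ('a \<Rightarrow> 'a \<Rightarrow> bool) \<Rightarrow> ('a \<times> 'a \<Rightarrow> nat) \<Rightarrow> bool" where
  "strongly_rainbow_connected V A c \<longleftrightarrow>
     (\<forall>x\<in>V. \<forall>y\<in>V. x \<noteq> y \<longrightarrow>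
        (\<exists>p. dipath V A p x y \<and> rainbow c p \<and> path_len p = digraph_dist V A x y))"

definition rc_star :: "'a set \<Rightarrow> ('a \<Rightarrow> 'a \<Rightarrow> bool) \<Rightarrow> nat" where
  "rc_star V A = (LEAST k. \<exists>c. arc_colouring V A c k \<and> rainbow_connected V A c)"

definition src_star :: "'a set \<Rightarrow> ('a \<Rightarrow> 'a \<Rightarrow> bool) \<Rightarrow> nat" where
  "src_star V A = (LEAST k. \<exists>c. arc_colouring V A c k \<and> strongly_rainbow_connected V A c)"

end

theory Submission
  imports Defs
begin

definition cnt :: "bool list \<Rightarrow> nat \<Rightarrow> nat" where
  "cnt w j = length (filter id (take j w))"

definition S :: "nat \<Rightarrow> bool list \<Rightarrow> nat \<Rightarrow> nat" where
  "S m w j = j + m * cnt w j"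

definition wv :: "nat \<Rightarrow> nat \<Rightarrow> bool list \<Rightarrow> nat \<Rightarrow> nat" where
  "wv m x w j = (x + S m w j) mod (m*m)"

definition wpath :: "nat \<Rightarrow> nat \<Rightarrow> bool list \<Rightarrow> nat list" where
  "wpath m x w = map (wv m x w) [0..<Suc (length w)]"

lemma cnt_Suc: "j < length w \<Longrightarrow> cnt w (Suc j) = cnt w j + (if w!j then 1 else 0)"
  by (simp add: cnt_def take_Suc_conv_app_nth)

lemma cnt_mono: "i \<le> j \<Longrightarrow> cnt w i \<le> cnt w j"
proof -
  assume "i \<le> j"
  then have "take j w = take i w @ take (j-i) (drop i w)"
    by (metis le_add_diff_inverse take_add)
  then show ?thesis unfolding cnt_def
    by (metis filter_append le_add1 length_append)
qed

lemma S_Suc: "j < length w \<Longrightarrow> S m w (Suc j) = S m w j + (if w!j then m+1 else 1)"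
  by (simp add: S_def cnt_Suc)

lemma S_strict: "i < j \<Longrightarrow> S m w i < S m w j"
  unfolding S_def using cnt_mono[of i j w]
  by (metis add_le_mono less_imp_le_nat mult_le_mono2 nat_add_left_cancel_less le_less_trans add_less_le_mono)

lemma wv_Suc: "j < length w \<Longrightarrow> wv m x w (Suc j) = (wv m x w j + (if w!j then m+1 else 1)) mod (m*m)"
  unfolding wv_def by (simp add: S_Suc mod_add_left_eq add.assoc)

lemma wpath_nth: "j \<le> length w \<Longrightarrow> wpath m x w ! j = wv m x w j"
  unfolding wpath_def by (simp del: upt_Suc)

lemma wpath_length: "length (wpath m x w) = Suc (length w)"
  unfolding wpath_def by simp

lemma wpath_dipath:
  assumes m2: "m \<ge> 2" and x: "x < m*m"
    and dist: "\<And>i j. i < j \<Longrightarrow> j \<le> length w \<Longrightarrow> wv m x w i \<noteq> wv m x w j"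
  shows "dipath (circulant_vertices (m*m)) (circulant_arc (m*m) {1, m+1}) (wpath m x w) x (wv m x w (length w))"
proof -
  have n0: "0 < m*m" using m2 by simp
  have hd: "hd (wpath m x w) = x"
    unfolding wpath_def wv_def S_def cnt_def using x by (simp del: upt_Suc add: hd_map)
  have last: "last (wpath m x w) = wv m x w (length w)"
    unfolding wpath_def by (simp del: upt_Suc add: last_map)
  have dis: "distinct (wpath m x w)"
    unfolding wpath_def distinct_map
  proof
    show "inj_on (wv m x w) (set [0..<Suc (length w)])"
    proof (rule inj_onI)
      fix i j assume i: "i \<in> set [0..<Suc (length w)]" and j: "j \<in> set [0..<Suc (length w)]"
        and e: "wv m x w i = wv m x w j"
      show "i = j"
      proof (rule ccontr)
        assume "i \<noteq> j"
        then have "i < j \<or> j < i" by arith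
        then show False using dist[of i j] dist[of j i] e i j by auto
      qed
    qed
  qed simp
  have sub: "set (wpath m x w) \<subseteq> circulant_vertices (m*m)"
    unfolding wpath_def wv_def circulant_vertices_def using n0 by auto
  have arcs: "\<forall>i. i + 1 < length (wpath m x w) \<longrightarrow>
      circulant_arc (m*m) {1, m+1} (wpath m x w ! i) (wpath m x w ! (i + 1))"
  proof (intro allI impI)
    fix i assume "i + 1 < length (wpath m x w)"
    then have i: "i < length w" by (simp add: wpath_length)
    have e: "wpath m x w ! (i+1) = (wpath m x w ! i + (if w!i then m+1 else 1)) mod (m*m)"
      using i wv_Suc[OF i] by (simp add: wpath_nth)
    show "circulant_arc (m*m) {1, m+1} (wpath m x w ! i) (wpath m x w ! (i + 1))"
      unfolding circulant_arc_def using e i n0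
      by (auto simp: wpath_nth wv_def)
  qed
  show ?thesis unfolding dipath_def using hd last dis sub arcs
    by (simp add: wpath_def)
qed

lemma dist_small:
  assumes "S m w (length w) < m*m" "i < j" "j \<le> length w"
  shows "wv m x w i \<noteq> wv m x w j"
proof
  assume e: "wv m x w i = wv m x w j"
  have lt: "S m w i < S m w j" using S_strict assms(2) .
  have le: "S m w j \<le> S m w (length w)"
    using S_strict[of j "length w" m w] assms(3) by (cases "j = length w") auto
  have "(x + S m w j) mod (m*m) = (x + S m w i) mod (m*m)" using e by (simp add: wv_def)
  then have "(m*m) dvd (x + S m w j) - (x + S m w i)"
    using lt by (simp add: mod_eq_dvd_iff_nat)
  then have "(m*m) dvd (S m w j - S m w i)" by simp
  moreover have "0 < S m w j - S m w i" "S m w j - S m w i < m*m" using lt le assms(1) by auto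
  ultimately show False using nat_dvd_not_less by blast
qed

definition col :: "nat \<Rightarrow> nat \<times> nat \<Rightarrow> nat" where
  "col m e = (if snd e = (fst e + 1) mod (m*m) \<and> fst e mod m \<noteq> 0 \<and> fst e mod m \<noteq> m - 1
              then m + fst e mod m else fst e div m + 1)"

lemma wv_mod: "m > 0 \<Longrightarrow> wv m x w j mod m = (x + j) mod m"
  unfolding wv_def S_def
  by (metis mod_mod_cancel dvd_triv_left mod_mult_self2 add.assoc mult.commute)

lemma wv_div: "m > 0 \<Longrightarrow> wv m x w j div m = ((x + j) div m + cnt w j) mod m"
proof -
  assume m: "m > 0"
  let ?y = "x + j + m * cnt w j"
  have "?y mod (m*m) = m * (?y div m mod m) + ?y mod m" by (rule mod_mult2_eq)
  then have "?y mod (m*m) div m = ?y div m mod m" using m by simp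
  moreover have "?y div m = (x+j) div m + cnt w j" using m by simp
  ultimately show ?thesis unfolding wv_def S_def by (simp add: add.assoc)
qed

lemma arc_col:
  assumes m2: "m \<ge> 2" and j: "j < length w"
  shows "col m (wv m x w j, wv m x w (Suc j)) =
    (if w!j \<or> (x+j) mod m = 0 \<or> (x+j) mod m = m - 1 then ((x + j) div m + cnt w j) mod m + 1
     else m + (x+j) mod m)"
proof -
  have m0: "m > 0" using m2 by simp
  let ?a = "wv m x w j"
  show ?thesis
  proof (cases "w!j")
    case True
    then have e: "wv m x w (Suc j) = (?a + (m+1)) mod (m*m)" using wv_Suc[OF j] by simp
    have ne: "(?a + (m+1)) mod (m*m) \<noteq> (?a + 1) mod (m*m)"
    proof
      assume "(?a + (m+1)) mod (m*m) = (?a + 1) mod (m*m)"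
      then have "(m*m) dvd (?a + (m+1)) - (?a + 1)" by (simp add: mod_eq_dvd_iff_nat)
      then have "(m*m) dvd m" by simp
      moreover have "m < m*m" using m2 by simp
      ultimately show False using m0 nat_dvd_not_less by blast
    qed
    show ?thesis unfolding col_def using True e ne by (simp add: wv_div m0)
  next
    case False
    then have e: "wv m x w (Suc j) = (?a + 1) mod (m*m)" using wv_Suc[OF j] by simp
    show ?thesis unfolding col_def using False e by (simp add: wv_div wv_mod m0)
  qed
qed

lemma rainbow_crit:
  assumes m2: "m \<ge> 2"
    and B: "\<And>i j. i < j \<Longrightarrow> j < length w \<Longrightarrow>
       (w!i \<or> (x+i) mod m = 0 \<or> (x+i) mod m = m - 1) \<Longrightarrow>
       (w!j \<or> (x+j) mod m = 0 \<or> (x+j) mod m = m - 1) \<Longrightarrow>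
       (x+i) div m + cnt w i < (x+j) div m + cnt w j \<and> (x+j) div m + cnt w j < (x+i) div m + cnt w i + m"
    and E: "\<And>i j. i < j \<Longrightarrow> j < length w \<Longrightarrow>
       \<not>(w!i \<or> (x+i) mod m = 0 \<or> (x+i) mod m = m - 1) \<Longrightarrow>
       \<not>(w!j \<or> (x+j) mod m = 0 \<or> (x+j) mod m = m - 1) \<Longrightarrow>
       (x+i) mod m \<noteq> (x+j) mod m"
  shows "rainbow (col m) (wpath m x w)"
proof -
  have m0: "m > 0" using m2 by simp
  define f where "f = (\<lambda>i. col m (wpath m x w ! i, wpath m x w ! (i + 1)))"
  have f: "f i = (if w!i \<or> (x+i) mod m = 0 \<or> (x+i) mod m = m - 1 then ((x + i) div m + cnt w i) mod m + 1
     else m + (x+i) mod m)" if "i < length w" for i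
    unfolding f_def using that arc_col[OF m2 that, of x] by (simp add: wpath_nth)
  have inj: "f i \<noteq> f j" if ij: "i < j" "j < length w" for i j
  proof -
    have i: "i < length w" using ij by simp
    show ?thesis
    proof (cases "w!i \<or> (x+i) mod m = 0 \<or> (x+i) mod m = m - 1")
      case bi: True
      show ?thesis
      proof (cases "w!j \<or> (x+j) mod m = 0 \<or> (x+j) mod m = m - 1")
        case bj: True
        have lt: "(x+i) div m + cnt w i < (x+j) div m + cnt w j"
          and lt2: "(x+j) div m + cnt w j < (x+i) div m + cnt w i + m"
          using B[OF ij bi bj] by auto
        have "((x + i) div m + cnt w i) mod m \<noteq> ((x + j) div m + cnt w j) mod m"
        proof
          define P where "P = (x + i) div m + cnt w i"
          define Q where "Q = (x + j) div m + cnt w j"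
          assume "((x + i) div m + cnt w i) mod m = ((x + j) div m + cnt w j) mod m"
          then have "Q mod m = P mod m" unfolding P_def Q_def by simp
          moreover have "P \<le> Q" using lt unfolding P_def Q_def by simp
          ultimately have "m dvd Q - P" using mod_eq_dvd_iff_nat by blast
          moreover have "0 < Q - P" "Q - P < m" using lt lt2 unfolding P_def Q_def by auto
          ultimately show False using nat_dvd_not_less by blast
        qed
        then show ?thesis using f[OF i] f[OF ij(2)] bi bj by simp
      next
        case bj: False
        have "((x + i) div m + cnt w i) mod m < m" using m0 by simp
        then show ?thesis using f[OF i] f[OF ij(2)] bi bj by auto
      qed
    next
      case bi: False
      show ?thesis
      proof (cases "w!j \<or> (x+j) mod m = 0 \<or> (x+j) mod m = m - 1")
        case bj: True
        have "((x + j) div m + cnt w j) mod m < m" using m0 by simp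
        then show ?thesis using f[OF i] f[OF ij(2)] bi bj by auto
      next
        case bj: False
        show ?thesis using f[OF i] f[OF ij(2)] bi bj E[OF ij bi bj] by simp
      qed
    qed
  qed
  have "distinct (map f [0..<length w])"
    unfolding distinct_map
  proof
    show "inj_on f (set [0..<length w])"
    proof (rule inj_onI)
      fix i j assume "i \<in> set [0..<length w]" "j \<in> set [0..<length w]" "f i = f j"
      then show "i = j" using inj[of i j] inj[of j i] by (metis atLeastLessThan_iff linorder_neqE_nat set_upt)
    qed
  qed simp
  then show ?thesis unfolding rainbow_def f_def by (simp add: wpath_length)
qed

lemma dm2: "(y::nat) < 2*m \<Longrightarrow> y div m = (if y < m then 0 else 1)
   \<and> y mod m = (if y < m then y else y - m)"
proof -
  assume y: "y < 2*m"
  show ?thesis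
  proof (cases "y < m")
    case True then show ?thesis by simp
  next
    case f1: False
    then have m0: "m > 0" using y by simp
    have "y div m = (y-m) div m + 1" using f1 m0 by (simp add: div_if)
    moreover have "y mod m = (y - m) mod m" using f1 m0 by (simp add: mod_if)
    ultimately show ?thesis using f1 y by simp
  qed
qed

lemma dm3: "(y::nat) < 3*m \<Longrightarrow> 2*m \<le> y \<Longrightarrow> y div m = 2 \<and> y mod m = y - 2*m"
proof -
  assume y: "y < 3*m" "2*m \<le> y"
  then have m0: "m > 0" by simp
  have "y - m < 2*m" "\<not> y - m < m" using y by auto
  then have "(y-m) div m = 1 \<and> (y-m) mod m = y - m - m" using dm2 by presburger
  moreover have "y div m = (y-m) div m + 1" using y m0 by (simp add: div_if)
  moreover have "y mod m = (y - m) mod m" using y m0 by (simp add: mod_if)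
  ultimately show ?thesis by simp
qed

lemma mod_neq_close: "i < j \<Longrightarrow> j < i + m \<Longrightarrow> ((y::nat)+i) mod m \<noteq> (y+j) mod m"
proof
  assume ij: "i < j" "j < i + m" and e: "(y+i) mod m = (y+j) mod m"
  then have "m dvd (y+j) - (y+i)" using mod_eq_dvd_iff_nat[of "y+i" "y+j" m] by simp
  then have "m dvd j - i" by simp
  moreover have "0 < j - i" "j - i < m" using ij by auto
  ultimately show False using nat_dvd_not_less by blast
qed

lemma cnt_a: "cnt (replicate b True @ replicate a False) i = min i b"
  unfolding cnt_def by (simp add: min_def)

lemma nth_a: "i < a + b \<Longrightarrow> (replicate b True @ replicate a False) ! i = (i < b)"
  by (simp add: nth_append)

lemma pat_aB:
  fixes m s a b i j :: nat
  assumes m2: "m \<ge> 2" and s: "s < m" and a: "a \<le> m" and b: "b \<le> m - 1"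
    and ab: "0 < a \<Longrightarrow> b \<le> m - 2" and sab: "s + a + b \<le> 2*m - 1"
    and am: "a = m \<Longrightarrow> s + b \<noteq> 0"
    and ij: "i < j" "j < a + b"
    and bi: "(i < b) \<or> (s+i) mod m = 0 \<or> (s+i) mod m = m - 1"
    and bj: "(j < b) \<or> (s+j) mod m = 0 \<or> (s+j) mod m = m - 1"
  shows "(s+i) div m + min i b < (s+j) div m + min j b \<and> (s+j) div m + min j b < (s+i) div m + min i b + m"
proof -
  have si: "s + i < 2*m" and sj: "s+j < 2*m" using ij sab m2 by auto
  note di = dm2[OF si] and dj = dm2[OF sj]
  have Dle: "(s+i) div m \<le> (s+j) div m" using ij by (simp add: div_le_mono)
  have Dj1: "(s+j) div m \<le> 1" using dj by simp
  have mm: "min j b - min i b \<le> m - 2"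
  proof (cases "a = 0")
    case True then show ?thesis using ij b by (simp add: min_def)
  next
    case False
    then have "b \<le> m - 2" using ab by simp
    moreover have "min j b - min i b \<le> b" by simp
    ultimately show ?thesis by linarith
  qed
  have minle: "min i b \<le> min j b" using ij by simp
  have up: "(s+j) div m + min j b < (s+i) div m + min i b + m"
    using Dj1 mm minle m2 by linarith
  have low: "(s+i) div m + min i b < (s+j) div m + min j b"
  proof (cases "i < b")
    case True then show ?thesis using ij Dle by (simp add: min_def)
  next
    case ib: False
    then have mi: "min i b = b" "min j b = b" using ij by auto
    have "(s+i) mod m = 0 \<or> (s+i) mod m = m - 1" using bi ib by simp
    then have "(s+i) div m < (s+j) div m"
    proof
      assume r0: "(s+i) mod m = 0"
      have jb: "\<not> j < b" using ib ij by simp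
      show ?thesis
      proof (cases "s + i < m")
        case True
        then have "s + i = 0" using r0 di by simp
        then have s0: "s = 0" "i = 0" "b = 0" using ib by auto
        have "j mod m = 0 \<or> j mod m = m - 1" using bj jb s0 by simp
        moreover have "j < m" using ij s0 a by simp
        ultimately have "j = m - 1" using ij s0 by auto
        then have "a = m" using ij s0 a by simp
        then show ?thesis using am s0 by simp
      next
        case False
        then have e: "s + i = m" using r0 di si by simp
        then have "(s+j) mod m = s + j - m" using dj ij by auto
        moreover have "s + j - m = j - i" using e by simp
        moreover have "j - i \<le> m - 2" using e sab ij by linarith
        moreover have "0 < j - i" using ij by simp
        ultimately have "(s+j) mod m \<noteq> 0 \<and> (s+j) mod m \<noteq> m - 1" using m2 by linarith
        then have False using bj jb by simp
        then show ?thesis ..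
      qed
    next
      assume r1: "(s+i) mod m = m - 1"
      have "s + i = m - 1"
      proof (rule ccontr)
        assume "s + i \<noteq> m - 1"
        then have "s + i \<ge> m" using r1 di by (auto split: if_splits)
        moreover have "s + i < 2*m - 2" using sab ij by linarith
        ultimately show False using r1 di by auto
      qed
      then have "(s+i) div m = 0" using di m2 by simp
      moreover have "s + j \<ge> m" using \<open>s + i = m - 1\<close> ij m2 by linarith
      then have "(s+j) div m = 1" using dj by simp
      ultimately show ?thesis by simp
    qed
    then show ?thesis using mi by simp
  qed
  show ?thesis using up low by simp
qed

lemma pat_aE:
  fixes m s a b i j :: nat
  assumes a: "a \<le> m" and ij: "i < j" "j < a + b"
    and bi: "\<not>((i < b) \<or> (s+i) mod m = 0 \<or> (s+i) mod m = m - 1)"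
  shows "(s+i) mod m \<noteq> (s+j) mod m"
proof -
  have "b \<le> i" using bi by simp
  then have "j < i + m" using ij a by linarith
  then show ?thesis using mod_neq_close[of i j m s] ij by blast
qed

definition wb :: "nat \<Rightarrow> nat \<Rightarrow> nat \<Rightarrow> bool list" where
  "wb t a c = replicate t True @ [False, True] @ replicate (a - 1) False @ replicate c True"

lemma cnt_app: "cnt (u @ v) j = cnt u j + cnt v (j - length u)"
  unfolding cnt_def by simp

lemma cnt_T: "cnt (replicate n True) j = min j n"
  unfolding cnt_def by simp

lemma cnt_F: "cnt (replicate n False) j = 0"
  unfolding cnt_def by simp

lemma cnt_FT: "cnt [False, True] j = (if j \<le> 1 then 0 else 1)"
  unfolding cnt_def by (cases j; cases "j - 1"; simp)

lemma length_wb: "1 \<le> a \<Longrightarrow> length (wb t a c) = t + a + 1 + c"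
  unfolding wb_def by simp

lemma cnt_wb: "1 \<le> a \<Longrightarrow> cnt (wb t a c) j =
  (if j \<le> t then j else if j \<le> t + 1 then t else if j \<le> t + a + 1 then t + 1 else min (j - a) (t + 1 + c))"
  unfolding wb_def cnt_app cnt_T cnt_F cnt_FT by (auto simp: min_def)

lemma nth_wb: "1 \<le> a \<Longrightarrow> j < t + a + 1 + c \<Longrightarrow> wb t a c ! j = (j < t \<or> j = t + 1 \<or> t + a + 1 \<le> j)"
  unfolding wb_def by (auto simp: nth_append nth_Cons split: nat.splits)

lemma pat_b_facts:
  fixes m s t a c j :: nat
  assumes m2: "m \<ge> 2" and st: "s + t = m - 1" and a: "1 \<le> a" "a \<le> m" and bm: "t + 1 + c \<le> m - 2"
    and j: "j < t + a + 1 + c"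
  shows "(s+j) div m + cnt (wb t a c) j = (if j \<le> t then j else if j = t+1 then t+1 else if j \<le> t+a then t+2
            else if j \<le> t+m then j-a+1 else j-a+2)"
    and "(wb t a c ! j \<or> (s+j) mod m = 0 \<or> (s+j) mod m = m - 1) = (j \<le> t+1 \<or> j = t+m \<or> t+a < j)"
proof -
  have cj: "cnt (wb t a c) j = (if j \<le> t then j else if j \<le> t + 1 then t else if j \<le> t + a + 1 then t + 1 else j - a)"
    using cnt_wb[OF a(1), of t c j] j by (auto simp: min_def)
  have nj: "wb t a c ! j = (j < t \<or> j = t + 1 \<or> t + a + 1 \<le> j)" using nth_wb[OF a(1) j] .
  have s3: "s + j < 3*m" using st j bm a by linarith
  show "(s+j) div m + cnt (wb t a c) j = (if j \<le> t then j else if j = t+1 then t+1 else if j \<le> t+a then t+2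
            else if j \<le> t+m then j-a+1 else j-a+2)"
  proof (cases "j \<le> t")
    case True
    then have "s + j < m" using st m2 by linarith
    then show ?thesis using True cj by simp
  next
    case f1: False
    show ?thesis
    proof (cases "j \<le> t + m")
      case True
      then have "s + j < 2*m" "\<not> s + j < m" using st f1 m2 by linarith+
      then have "(s+j) div m = 1" using dm2 by presburger
      then show ?thesis using f1 True cj a by auto
    next
      case False
      then have "s + j \<ge> 2*m" using st m2 by linarith
      then have "(s+j) div m = 2" using dm3 s3 by blast
      then show ?thesis using f1 False cj a by auto
    qed
  qed
  show "(wb t a c ! j \<or> (s+j) mod m = 0 \<or> (s+j) mod m = m - 1) = (j \<le> t+1 \<or> j = t+m \<or> t+a < j)"
  proof (cases "j \<le> t")
    case True
    then have "s + j < m" using st m2 by linarith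
    then have "(s+j) mod m = s + j" by simp
    then show ?thesis using True nj st m2 by auto
  next
    case f1: False
    show ?thesis
    proof (cases "j \<le> t + a")
      case True
      then have "s + j < 2*m" "\<not> s + j < m" using st f1 m2 a by linarith+
      then have "(s+j) mod m = s + j - m" using dm2 by presburger
      then have "(s+j) mod m = j - t - 1" using st f1 m2 by simp
      then show ?thesis using f1 True nj st m2 by auto
    next
      case False
      then show ?thesis using nj by auto
    qed
  qed
qed

lemma pat_bB:
  fixes m s t a c i j :: nat
  assumes m2: "m \<ge> 2" and st: "s + t = m - 1" and a: "1 \<le> a" "a \<le> m" and bm: "t + 1 + c \<le> m - 2"
    and ij: "i < j" "j < t + a + 1 + c"
    and bi: "wb t a c ! i \<or> (s+i) mod m = 0 \<or> (s+i) mod m = m - 1"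
    and bj: "wb t a c ! j \<or> (s+j) mod m = 0 \<or> (s+j) mod m = m - 1"
  shows "(s+i) div m + cnt (wb t a c) i < (s+j) div m + cnt (wb t a c) j \<and>
         (s+j) div m + cnt (wb t a c) j < (s+i) div m + cnt (wb t a c) i + m"
proof -
  have i: "i < t + a + 1 + c" using ij by simp
  note Gi = pat_b_facts(1)[OF m2 st a bm i] and Gj = pat_b_facts(1)[OF m2 st a bm ij(2)]
  have Bi: "i \<le> t+1 \<or> i = t+m \<or> t+a < i" using pat_b_facts(2)[OF m2 st a bm i] bi by simp
  have Bj: "j \<le> t+1 \<or> j = t+m \<or> t+a < j" using pat_b_facts(2)[OF m2 st a bm ij(2)] bj by simp
  show ?thesis unfolding Gi Gj using ij Bi Bj a bm m2 st by (auto split: if_split)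
qed

lemma pat_bE:
  fixes m s t a c i j :: nat
  assumes m2: "m \<ge> 2" and st: "s + t = m - 1" and a: "1 \<le> a" "a \<le> m" and bm: "t + 1 + c \<le> m - 2"
    and ij: "i < j" "j < t + a + 1 + c"
    and bi: "\<not> (wb t a c ! i \<or> (s+i) mod m = 0 \<or> (s+i) mod m = m - 1)"
    and bj: "\<not> (wb t a c ! j \<or> (s+j) mod m = 0 \<or> (s+j) mod m = m - 1)"
  shows "(s+i) mod m \<noteq> (s+j) mod m"
proof -
  have i: "i < t + a + 1 + c" using ij by simp
  have Bi: "\<not> (i \<le> t+1 \<or> i = t+m \<or> t+a < i)" using pat_b_facts(2)[OF m2 st a bm i] bi by simp
  have Bj: "\<not> (j \<le> t+1 \<or> j = t+m \<or> t+a < j)" using pat_b_facts(2)[OF m2 st a bm ij(2)] bj by simp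
  have "j < i + m" using Bi Bj a by linarith
  then show ?thesis using mod_neq_close[of i j m s] ij by blast
qed

definition mu :: "nat \<Rightarrow> nat \<Rightarrow> nat" where
  "mu m d = (if d div m \<le> d mod m then d mod m else d mod m + m)"

lemma nt_lower:
  fixes m L b d :: nat
  assumes m2: "m \<ge> 2" and bL: "b \<le> L" and e: "(L + b*m) mod (m*m) = d"
  shows "mu m d \<le> L"
proof -
  have m0: "m > 0" using m2 by simp
  have dm: "d mod m = L mod m"
  proof -
    have "d mod m = (L + b*m) mod (m*m) mod m" using e by simp
    also have "\<dots> = (L + b*m) mod m" by (simp add: mod_mod_cancel)
    also have "\<dots> = L mod m" by simp
    finally show ?thesis .
  qed
  show ?thesis
  proof (cases "L < m")
    case True
    then have Lr: "d mod m = L" using dm by simp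
    have bm: "b < m" using bL True by simp
    have "L + b*m < m*m"
    proof -
      have "L + b*m < m + b*m" using True by simp
      also have "\<dots> = (b+1)*m" by simp
      also have "\<dots> \<le> m*m" using bm by (intro mult_le_mono1) simp
      finally show ?thesis .
    qed
    then have "d = L + b*m" using e by simp
    then have "d div m = b" using True by simp
    then show ?thesis unfolding mu_def using Lr bL by simp
  next
    case False
    have "L = L div m * m + L mod m" by simp
    moreover have "L div m \<ge> 1" using False m0 by (simp add: Suc_le_eq div_greater_zero_iff)
    ultimately have "L \<ge> m + L mod m" by (metis add_le_mono1 mult_1 mult_le_mono1)
    then show ?thesis unfolding mu_def using dm by auto
  qed
qed

lemma dipath_steps:
  fixes m :: nat
  assumes dp: "dipath (circulant_vertices (m*m)) (circulant_arc (m*m) {1, m+1}) p x y"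
  shows "\<exists>a b. a + b = length p - 1 \<and> y = (x + a + b*(m+1)) mod (m*m)"
proof -
  have ne: "p \<noteq> []" and hd: "hd p = x" and lst: "last p = y"
    and sub: "set p \<subseteq> {..<m*m}"
    and arc: "\<And>i. i + 1 < length p \<Longrightarrow> circulant_arc (m*m) {1, m+1} (p!i) (p!(i+1))"
    using dp unfolding dipath_def circulant_vertices_def by auto
  have x: "x < m*m" using ne hd sub by (metis hd_in_set lessThan_iff subsetD)
  have p0: "p!0 = x" using ne hd by (simp add: hd_conv_nth)
  have claim: "\<And>i. i < length p \<Longrightarrow> \<exists>a b. a + b = i \<and> p!i = (x + a + b*(m+1)) mod (m*m)"
  proof -
    fix i show "i < length p \<Longrightarrow> \<exists>a b. a + b = i \<and> p!i = (x + a + b*(m+1)) mod (m*m)"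
    proof (induction i)
      case 0 then show ?case using p0 x by auto
    next
      case (Suc i)
      then obtain a b where ab: "a + b = i" "p!i = (x + a + b*(m+1)) mod (m*m)" by auto
      have "circulant_arc (m*m) {1, m+1} (p!i) (p!(i+1))" using arc Suc.prems by simp
      then have "p!(i+1) = (p!i + 1) mod (m*m) \<or> p!(i+1) = (p!i + (m+1)) mod (m*m)"
        unfolding circulant_arc_def by auto
      then show ?case
      proof
        assume "p!(i+1) = (p!i + 1) mod (m*m)"
        moreover have "(p!i + 1) mod (m*m) = (x + a + b*(m+1) + 1) mod (m*m)"
          unfolding ab(2) by (rule mod_add_left_eq)
        moreover have "x + a + b*(m+1) + 1 = x + (a+1) + b*(m+1)" by simp
        ultimately have "p!(Suc i) = (x + (a+1) + b*(m+1)) mod (m*m)" by (metis Suc_eq_plus1)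
        then show ?case using ab by (intro exI[of _ "a+1"] exI[of _ b]) simp
      next
        assume "p!(i+1) = (p!i + (m+1)) mod (m*m)"
        moreover have "(p!i + (m+1)) mod (m*m) = (x + a + b*(m+1) + (m+1)) mod (m*m)"
          unfolding ab(2) by (rule mod_add_left_eq)
        moreover have "x + a + b*(m+1) + (m+1) = x + a + (b+1)*(m+1)" by simp
        ultimately have "p!(Suc i) = (x + a + (b+1)*(m+1)) mod (m*m)" by (metis Suc_eq_plus1)
        then show ?case using ab by (intro exI[of _ a] exI[of _ "b+1"]) simp
      qed
    qed
  qed
  have "y = p!(length p - 1)" using ne lst by (simp add: last_conv_nth)
  then show ?thesis using claim[of "length p - 1"] ne by auto
qed

lemma mod_add_cancel_nat: "((x::nat) + A) mod n = (x + d) mod n \<Longrightarrow> A mod n = d mod n"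
proof -
  assume e: "(x + A) mod n = (x + d) mod n"
  show ?thesis
  proof (cases "d \<le> A")
    case True
    then have "n dvd (x + A) - (x + d)" using e mod_eq_dvd_iff_nat[of "x+d" "x+A" n] by simp
    then have "n dvd A - d" by simp
    then show ?thesis using True mod_eq_dvd_iff_nat by blast
  next
    case False
    then have "n dvd (x + d) - (x + A)" using e mod_eq_dvd_iff_nat[of "x+A" "x+d" n] by simp
    then have "n dvd d - A" by simp
    then show ?thesis using False mod_eq_dvd_iff_nat[of A d n] by simp
  qed
qed

lemma dist_lower:
  fixes m :: nat
  assumes m2: "m \<ge> 2" and dp: "dipath (circulant_vertices (m*m)) (circulant_arc (m*m) {1, m+1}) p x y"
    and d: "d < m*m" and yd: "y = (x + d) mod (m*m)"
  shows "mu m d \<le> path_len p"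
proof -
  obtain a b where ab: "a + b = length p - 1" "y = (x + a + b*(m+1)) mod (m*m)"
    using dipath_steps[OF dp] by auto
  have e1: "x + (a + b + b*m) = x + a + b*(m+1)" by (simp add: algebra_simps)
  have "(x + (a + b + b*m)) mod (m*m) = (x + d) mod (m*m)" unfolding e1 using ab(2) yd by simp
  then have "(a + b + b*m) mod (m*m) = d mod (m*m)" by (rule mod_add_cancel_nat)
  then have "(a + b + b*m) mod (m*m) = d" using d by simp
  then have "mu m d \<le> a + b" using nt_lower[OF m2, of b "a+b" d] by simp
  then show ?thesis using ab unfolding path_len_def by simp
qed

lemma xdiv: "m > 0 \<Longrightarrow> ((x::nat) + i) div m = x div m + (x mod m + i) div m"
proof -
  assume m: "m > 0"
  have "x + i = (x mod m + i) + (x div m) * m" by simp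
  then have "(x + i) div m = (x mod m + i + (x div m) * m) div m" by simp
  also have "\<dots> = (x mod m + i) div m + x div m" using m by (metis add.commute div_mult_self1 not_gr0)
  finally show ?thesis by simp
qed

lemma xmod: "((x::nat) + i) mod m = (x mod m + i) mod m"
  by (simp add: mod_add_left_eq)

lemma rainbow_crit_s:
  assumes m2: "m \<ge> 2"
    and B: "\<And>i j. i < j \<Longrightarrow> j < length w \<Longrightarrow>
       (w!i \<or> (x mod m+i) mod m = 0 \<or> (x mod m+i) mod m = m - 1) \<Longrightarrow>
       (w!j \<or> (x mod m+j) mod m = 0 \<or> (x mod m+j) mod m = m - 1) \<Longrightarrow>
       (x mod m+i) div m + cnt w i < (x mod m+j) div m + cnt w j \<and>
       (x mod m+j) div m + cnt w j < (x mod m+i) div m + cnt w i + m"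
    and E: "\<And>i j. i < j \<Longrightarrow> j < length w \<Longrightarrow>
       \<not>(w!i \<or> (x mod m+i) mod m = 0 \<or> (x mod m+i) mod m = m - 1) \<Longrightarrow>
       \<not>(w!j \<or> (x mod m+j) mod m = 0 \<or> (x mod m+j) mod m = m - 1) \<Longrightarrow>
       (x mod m+i) mod m \<noteq> (x mod m+j) mod m"
  shows "rainbow (col m) (wpath m x w)"
proof (rule rainbow_crit[OF m2])
  have m0: "m > 0" using m2 by simp
  fix i j assume ij: "i < j" "j < length w"
  {
    assume bi: "w!i \<or> (x+i) mod m = 0 \<or> (x+i) mod m = m - 1"
      and bj: "w!j \<or> (x+j) mod m = 0 \<or> (x+j) mod m = m - 1"
    have "(x mod m+i) div m + cnt w i < (x mod m+j) div m + cnt w j \<and>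
       (x mod m+j) div m + cnt w j < (x mod m+i) div m + cnt w i + m"
      using B[OF ij] bi bj by (simp add: xmod[symmetric])
    then show "(x+i) div m + cnt w i < (x+j) div m + cnt w j \<and> (x+j) div m + cnt w j < (x+i) div m + cnt w i + m"
      using xdiv[OF m0, of x i] xdiv[OF m0, of x j] by simp
  }
  {
    assume bi: "\<not>(w!i \<or> (x+i) mod m = 0 \<or> (x+i) mod m = m - 1)"
      and bj: "\<not>(w!j \<or> (x+j) mod m = 0 \<or> (x+j) mod m = m - 1)"
    show "(x+i) mod m \<noteq> (x+j) mod m"
      using E[OF ij] bi bj by (simp add: xmod[symmetric])
  }
qed

lemma colour_ok:
  assumes m2: "m \<ge> 2"
  shows "arc_colouring (circulant_vertices (m*m)) (circulant_arc (m*m) {1, m+1}) (col m) (2*m - 2)"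
  unfolding arc_colouring_def
proof (intro ballI impI)
  fix i j assume i: "i \<in> circulant_vertices (m*m)" and "j \<in> circulant_vertices (m*m)"
    and "circulant_arc (m*m) {1, m+1} i j"
  have m0: "m > 0" using m2 by simp
  have il: "i < m*m" using i unfolding circulant_vertices_def by simp
  have idm: "i div m < m" using il m0 by (simp add: div_less_iff_less_mult)
  have imm: "i mod m < m" using m0 by simp
  show "col m (i, j) \<in> {1..2*m - 2}"
  proof (cases "j = (i + 1) mod (m*m) \<and> i mod m \<noteq> 0 \<and> i mod m \<noteq> m - 1")
    case True
    then have "i mod m \<le> m - 2" "1 \<le> i mod m" using imm by auto
    then have "m + i mod m \<le> 2*m - 2" "1 \<le> m + i mod m" using m2 by linarith+
    then show ?thesis using True unfolding col_def by simp
  next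
    case False
    then show ?thesis using idm m2 unfolding col_def by auto
  qed
qed

lemma dist_eq:
  fixes m :: nat
  assumes m2: "m \<ge> 2" and dp: "dipath (circulant_vertices (m*m)) (circulant_arc (m*m) {1, m+1}) p x y"
    and d: "d < m*m" and yd: "y = (x + d) mod (m*m)" and pl: "path_len p = mu m d"
  shows "digraph_dist (circulant_vertices (m*m)) (circulant_arc (m*m) {1, m+1}) x y = mu m d"
  unfolding digraph_dist_def
proof (rule Least_equality)
  show "\<exists>p. dipath (circulant_vertices (m*m)) (circulant_arc (m*m) {1, m+1}) p x y \<and> path_len p = mu m d"
    using dp pl by blast
next
  fix l assume "\<exists>p. dipath (circulant_vertices (m*m)) (circulant_arc (m*m) {1, m+1}) p x y \<and> path_len p = l"
  then obtain p' where "dipath (circulant_vertices (m*m)) (circulant_arc (m*m) {1, m+1}) p' x y" "path_len p' = l"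
    by blast
  then show "mu m d \<le> l" using dist_lower[OF m2 _ d yd] by metis
qed

lemma finish:
  fixes m :: nat
  assumes m2: "m \<ge> 2" and x: "x < m*m" and d: "d < m*m" and yd: "y = (x + d) mod (m*m)"
    and len: "length w = mu m d" and endp: "wv m x w (length w) = y"
    and dist: "\<And>i j. i < j \<Longrightarrow> j \<le> length w \<Longrightarrow> wv m x w i \<noteq> wv m x w j"
    and rb: "rainbow (col m) (wpath m x w)"
  shows "\<exists>p. dipath (circulant_vertices (m*m)) (circulant_arc (m*m) {1, m+1}) p x y \<and> rainbow (col m) p
     \<and> path_len p = digraph_dist (circulant_vertices (m*m)) (circulant_arc (m*m) {1, m+1}) x y"
proof -
  have dp: "dipath (circulant_vertices (m*m)) (circulant_arc (m*m) {1, m+1}) (wpath m x w) x y"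
    using wpath_dipath[OF m2 x dist] endp by simp
  have pl: "path_len (wpath m x w) = mu m d" unfolding path_len_def using len by (simp add: wpath_length)
  show ?thesis using dp rb pl dist_eq[OF m2 dp d yd pl] by metis
qed

lemma case_a:
  fixes m x y a b d :: nat
  assumes m2: "m \<ge> 2" and x: "x < m*m" and a: "a \<le> m" and b: "b \<le> m - 1"
    and ab: "0 < a \<Longrightarrow> b \<le> m - 2" and sab: "x mod m + a + b \<le> 2*m - 1"
    and am: "a = m \<Longrightarrow> x mod m + b \<noteq> 0"
    and dd: "d = a + b + m*b" and d: "d < m*m" and yd: "y = (x + d) mod (m*m)" and mu: "a + b = mu m d"
  shows "\<exists>p. dipath (circulant_vertices (m*m)) (circulant_arc (m*m) {1, m+1}) p x y \<and> rainbow (col m) p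
     \<and> path_len p = digraph_dist (circulant_vertices (m*m)) (circulant_arc (m*m) {1, m+1}) x y"
proof -
  define w where "w = replicate b True @ replicate a False"
  have lw: "length w = a + b" unfolding w_def by simp
  have Sw: "S m w (length w) = d" unfolding S_def lw w_def cnt_a dd by simp
  have s: "x mod m < m" using m2 by simp
  show ?thesis
  proof (rule finish[OF m2 x d yd])
    show "length w = mu m d" using lw mu by simp
    show "wv m x w (length w) = y" unfolding wv_def Sw yd ..
    show "\<And>i j. i < j \<Longrightarrow> j \<le> length w \<Longrightarrow> wv m x w i \<noteq> wv m x w j"
      using dist_small Sw d by simp
    show "rainbow (col m) (wpath m x w)"
    proof (rule rainbow_crit_s[OF m2])
      fix i j assume ij: "i < j" "j < length w"
      then have ij': "i < j" "j < a + b" using lw by auto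
      have ni: "w!i = (i < b)" using nth_a ij' unfolding w_def by simp
      have nj: "w!j = (j < b)" using nth_a ij' unfolding w_def by simp
      have ci: "cnt w i = min i b" "cnt w j = min j b" unfolding w_def cnt_a by auto
      {
        assume "w ! i \<or> (x mod m + i) mod m = 0 \<or> (x mod m + i) mod m = m - 1"
          "w ! j \<or> (x mod m + j) mod m = 0 \<or> (x mod m + j) mod m = m - 1"
        then show "(x mod m + i) div m + cnt w i < (x mod m + j) div m + cnt w j \<and>
          (x mod m + j) div m + cnt w j < (x mod m + i) div m + cnt w i + m"
          using pat_aB[OF m2 s a b ab sab am ij'] ni nj ci by simp
      }
      {
        assume "\<not> (w ! i \<or> (x mod m + i) mod m = 0 \<or> (x mod m + i) mod m = m - 1)"
        then show "(x mod m + i) mod m \<noteq> (x mod m + j) mod m"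
          using pat_aE[OF a ij'] ni by simp
      }
    qed
  qed
qed

lemma case_b:
  fixes m x y a t c d :: nat
  assumes m2: "m \<ge> 2" and x: "x < m*m" and st: "x mod m + t = m - 1" and a: "1 \<le> a" "a \<le> m"
    and bm: "t + 1 + c \<le> m - 2"
    and dd: "d = a + (t+1+c) + m*(t+1+c)" and d: "d < m*m" and yd: "y = (x + d) mod (m*m)"
    and mu: "a + (t+1+c) = mu m d"
  shows "\<exists>p. dipath (circulant_vertices (m*m)) (circulant_arc (m*m) {1, m+1}) p x y \<and> rainbow (col m) p
     \<and> path_len p = digraph_dist (circulant_vertices (m*m)) (circulant_arc (m*m) {1, m+1}) x y"
proof -
  define w where "w = wb t a c"
  have lw: "length w = t + a + 1 + c" unfolding w_def using length_wb[OF a(1)] .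
  have "cnt (wb t a c) (t+a+1+c) = t + 1 + c" unfolding cnt_wb[OF a(1)] using a by (auto simp: min_def)
  then have cL: "cnt w (length w) = t + 1 + c" using lw unfolding w_def by simp
  have Sw: "S m w (length w) = d" using cL lw dd unfolding S_def by simp
  show ?thesis
  proof (rule finish[OF m2 x d yd])
    show "length w = mu m d" using lw mu by simp
    show "wv m x w (length w) = y" unfolding wv_def Sw yd ..
    show "\<And>i j. i < j \<Longrightarrow> j \<le> length w \<Longrightarrow> wv m x w i \<noteq> wv m x w j"
      using dist_small Sw d by simp
    show "rainbow (col m) (wpath m x w)"
    proof (rule rainbow_crit_s[OF m2])
      fix i j assume ij: "i < j" "j < length w"
      then have ij': "i < j" "j < t + a + 1 + c" using lw by auto
      {
        assume h1: "w ! i \<or> (x mod m + i) mod m = 0 \<or> (x mod m + i) mod m = m - 1"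
          and h2: "w ! j \<or> (x mod m + j) mod m = 0 \<or> (x mod m + j) mod m = m - 1"
        show "(x mod m + i) div m + cnt w i < (x mod m + j) div m + cnt w j \<and>
          (x mod m + j) div m + cnt w j < (x mod m + i) div m + cnt w i + m"
          unfolding w_def by (rule pat_bB[OF m2 st a bm ij' h1[unfolded w_def] h2[unfolded w_def]])
      }
      {
        assume h1: "\<not> (w ! i \<or> (x mod m + i) mod m = 0 \<or> (x mod m + i) mod m = m - 1)"
          and h2: "\<not> (w ! j \<or> (x mod m + j) mod m = 0 \<or> (x mod m + j) mod m = m - 1)"
        show "(x mod m + i) mod m \<noteq> (x mod m + j) mod m"
          by (rule pat_bE[OF m2 st a bm ij' h1[unfolded w_def] h2[unfolded w_def]])
      }
    qed
  qed
qed

lemma case_c: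
  fixes m x y :: nat
  assumes m2: "m \<ge> 2" and x: "x < m*m" and s0: "x mod m = 0"
    and yd: "y = (x + m) mod (m*m)"
  shows "\<exists>p. dipath (circulant_vertices (m*m)) (circulant_arc (m*m) {1, m+1}) p x y \<and> rainbow (col m) p
     \<and> path_len p = digraph_dist (circulant_vertices (m*m)) (circulant_arc (m*m) {1, m+1}) x y"
proof -
  define w where "w = replicate m True"
  have m0: "m > 0" using m2 by simp
  have lw: "length w = m" unfolding w_def by simp
  have cw: "cnt w j = min j m" for j unfolding w_def cnt_T ..
  have d: "m < m*m" using m2 by simp
  have mu: "mu m m = m" unfolding mu_def using m2 by simp
  show ?thesis
  proof (rule finish[OF m2 x d yd])
    show "length w = mu m m" using lw mu by simp
    have "wv m x w (length w) = (x + m + m*m) mod (m*m)" unfolding wv_def S_def lw cw by (simp add: add.assoc)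
    then show "wv m x w (length w) = y" unfolding yd by simp
    show "wv m x w i \<noteq> wv m x w j" if ij: "i < j" "j \<le> length w" for i j
    proof
      assume e: "wv m x w i = wv m x w j"
      have Si: "S m w i = i * (m+1)" "S m w j = j * (m+1)" using ij lw unfolding S_def cw by auto
      have "S m w i \<le> S m w j" using S_strict[OF ij(1), of m w] by simp
      then have "(m*m) dvd (x + S m w j) - (x + S m w i)" using e unfolding wv_def
        using mod_eq_dvd_iff_nat[of "x + S m w i" "x + S m w j" "m*m"] by simp
      moreover have "x + S m w j - (x + S m w i) = j*(m+1) - i*(m+1)" unfolding Si by simp
      moreover have "j*(m+1) - i*(m+1) = (j - i)*(m+1)" by (rule diff_mult_distrib[symmetric])
      ultimately have dv: "(m*m) dvd (j - i) * (m+1)" by simp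
      then have "m dvd (j - i) * m + (j - i)" by (metis dvd_mult_left distrib_left mult.commute mult_1_right)
      then have "m dvd (j - i)" by (simp add: dvd_add_right_iff)
      moreover have "0 < j - i" "j - i \<le> m" using ij lw by auto
      ultimately have ji: "j - i = m" using nat_dvd_not_less by (metis le_neq_implies_less)
      then have "(m*m) dvd m * (m+1)" using dv by (simp add: mult.commute)
      then have "m dvd (m+1)" using m0 by simp
      then have "m dvd 1" by (metis dvd_add_right_iff dvd_refl)
      then show False using m2 by simp
    qed
    show "rainbow (col m) (wpath m x w)"
    proof (rule rainbow_crit_s[OF m2])
      fix i j assume ij: "i < j" "j < length w"
      have dv: "i div m = 0" "j div m = 0" using ij lw by auto
      show "(x mod m + i) div m + cnt w i < (x mod m + j) div m + cnt w j \<and>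
          (x mod m + j) div m + cnt w j < (x mod m + i) div m + cnt w i + m"
        using ij lw s0 dv cw by simp
      show "\<not> (w ! i \<or> (x mod m + i) mod m = 0 \<or> (x mod m + i) mod m = m - 1) \<Longrightarrow>
         (x mod m + i) mod m \<noteq> (x mod m + j) mod m"
        using ij lw unfolding w_def by simp
    qed
  qed
qed

lemma pair:
  fixes m x y :: nat
  assumes m2: "m \<ge> 2" and x: "x < m*m" and y: "y < m*m"
  shows "\<exists>p. dipath (circulant_vertices (m*m)) (circulant_arc (m*m) {1, m+1}) p x y \<and> rainbow (col m) p
     \<and> path_len p = digraph_dist (circulant_vertices (m*m)) (circulant_arc (m*m) {1, m+1}) x y"
proof -
  have m0: "m > 0" using m2 by simp
  define n where "n = m*m"
  define d where "d = (y + n - x) mod n"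
  have n0: "n > 0" using m0 unfolding n_def by simp
  have d: "d < m*m" unfolding d_def n_def using n0 n_def by simp
  have yd: "y = (x + d) mod (m*m)"
  proof -
    have "(x + d) mod n = (x + (y + n - x)) mod n" unfolding d_def by (simp add: mod_add_right_eq)
    also have "x + (y + n - x) = y + 1*n" using x n_def by simp
    also have "(y + 1*n) mod n = y" using y n_def by simp
    finally show ?thesis unfolding n_def by simp
  qed
  define q where "q = d div m"
  define r where "r = d mod m"
  have dqr: "d = r + m*q" unfolding q_def r_def by simp
  have rm: "r < m" unfolding r_def using m0 by simp
  have qm: "q < m" unfolding q_def using d m0 by (simp add: div_less_iff_less_mult)
  have s: "x mod m < m" using m0 by simp
  show ?thesis
  proof (cases "q \<le> r")
    case True
    have mu: "mu m d = r" unfolding mu_def using True q_def r_def by simp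
    show ?thesis
    proof (rule case_a[OF m2 x _ _ _ _ _ _ d yd, of "r - q" q])
      show "r - q \<le> m" using rm by simp
      show "q \<le> m - 1" using qm by simp
      show "0 < r - q \<Longrightarrow> q \<le> m - 2" using rm by simp
      show "x mod m + (r - q) + q \<le> 2 * m - 1" using s rm True by linarith
      show "r - q = m \<Longrightarrow> x mod m + q \<noteq> 0" using rm by simp
      show "d = r - q + q + m * q" using dqr True by simp
      show "r - q + q = mu m d" using mu True by simp
    qed
  next
    case False
    then have q1: "q \<ge> 1" by simp
    have mu: "mu m d = r + m" unfolding mu_def using False q_def r_def by simp
    define b where "b = q - 1"
    define a where "a = r + m - b"
    have bm: "b \<le> m - 2" unfolding b_def using qm by simp
    have rb: "r \<le> b" unfolding b_def using False by simp
    have am: "a \<le> m" "1 \<le> a" unfolding a_def using rb bm m2 by linarith+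
    have dab: "d = a + b + m*b"
    proof -
      have "a + b = r + m" unfolding a_def using rb bm by simp
      then have "a + b + m*b = r + m*(b+1)" by (simp add: algebra_simps)
      also have "b + 1 = q" unfolding b_def using q1 by simp
      finally show ?thesis using dqr by simp
    qed
    have muab: "a + b = mu m d" unfolding mu a_def using rb bm by simp
    show ?thesis
    proof (cases "x mod m = 0 \<and> q = 1")
      case True
      then have "r = 0" using False by simp
      then have "d = m" using dqr True by simp
      then show ?thesis using case_c[OF m2 x _] True yd by simp
    next
      case nc: False
      show ?thesis
      proof (cases "x mod m + b \<le> m - 1")
        case True
        show ?thesis
        proof (rule case_a[OF m2 x am(1) _ _ _ _ dab d yd muab])
          show "b \<le> m - 1" using bm by simp
          show "0 < a \<Longrightarrow> b \<le> m - 2" using bm .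
          show "x mod m + a + b \<le> 2 * m - 1" using True am by simp
          show "a = m \<Longrightarrow> x mod m + b \<noteq> 0" using nc b_def q1 by auto
        qed
      next
        case f2: False
        define t where "t = m - 1 - x mod m"
        define c where "c = b - 1 - t"
        have st: "x mod m + t = m - 1" unfolding t_def using s by simp
        have tb: "t + 1 + c = b" unfolding c_def t_def using f2 s by simp
        show ?thesis
        proof (rule case_b[OF m2 x st am(2) am(1)])
          show "t + 1 + c \<le> m - 2" using tb bm by simp
          show "d = a + (t + 1 + c) + m * (t + 1 + c)" using tb dab by simp
          show "d < m*m" by (rule d)
          show "y = (x + d) mod (m * m)" by (rule yd)
          show "a + (t + 1 + c) = mu m d" using tb muab by simp
        qed
      qed
    qed
  qed
qed

lemma src_col:
  assumes m2: "m \<ge> 2"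
  shows "strongly_rainbow_connected (circulant_vertices (m*m)) (circulant_arc (m*m) {1, m+1}) (col m)"
  unfolding strongly_rainbow_connected_def
proof (intro ballI impI)
  fix x y assume "x \<in> circulant_vertices (m*m)" "y \<in> circulant_vertices (m*m)" "x \<noteq> y"
  then show "\<exists>p. dipath (circulant_vertices (m*m)) (circulant_arc (m*m) {1, m+1}) p x y \<and> rainbow (col m) p
     \<and> path_len p = digraph_dist (circulant_vertices (m*m)) (circulant_arc (m*m) {1, m+1}) x y"
    using pair[OF m2] unfolding circulant_vertices_def by simp
qed

lemma lower:
  assumes m2: "m \<ge> 2"
    and ac: "arc_colouring (circulant_vertices (m*m)) (circulant_arc (m*m) {1, m+1}) c K"
    and rc: "rainbow_connected (circulant_vertices (m*m)) (circulant_arc (m*m) {1, m+1}) c"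
  shows "2*m - 2 \<le> K"
proof -
  have m0: "m > 0" using m2 by simp
  have n4: "4 \<le> m*m" using m2 mult_le_mono[of 2 m 2 m] by simp
  define y where "y = m*m - 2"
  have V: "0 \<in> circulant_vertices (m*m)" "y \<in> circulant_vertices (m*m)" "0 \<noteq> y"
    unfolding circulant_vertices_def y_def using n4 m0 by auto
  obtain p where dp: "dipath (circulant_vertices (m*m)) (circulant_arc (m*m) {1, m+1}) p 0 y"
    and rb: "rainbow c p"
    using rc V unfolding rainbow_connected_def by blast
  have yd: "y = (0 + y) mod (m*m)" "y < m*m" unfolding y_def using n4 by auto
  have ym: "y = (m - 2) + m*(m - 1)"
  proof -
    have "m*m = m + m*(m-1)" using m0 by (metis add.commute mult.right_neutral Suc_pred right_diff_distrib' diff_add_inverse mult_Suc_right)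
    then show ?thesis unfolding y_def using m2 by simp
  qed
  have ym': "y = (m - 2) + (m - 1)*m" using ym by (simp add: mult.commute)
  have mn0: "m \<noteq> 0" and ml: "m - 2 < m" using m2 by auto
  have "y div m = (m - 1) + (m - 2) div m" unfolding ym' by (rule div_mult_self1[OF mn0])
  then have yd1: "y div m = m - 1" using ml by simp
  have "y mod m = (m - 2) mod m" unfolding ym' by (rule mod_mult_self1)
  then have yd2: "y mod m = m - 2" using ml by simp
  note yd1 yd2
  have "\<not> (m - 1 \<le> m - 2)" using m2 by simp
  then have "mu m y = (m - 2) + m" unfolding mu_def using yd1 yd2 by simp
  then have mu: "mu m y = 2*m - 2" using m2 by linarith
  have len: "2*m - 2 \<le> path_len p" using dist_lower[OF m2 dp yd(2) yd(1)] mu by simp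
  define cl where "cl = map (\<lambda>i. c (p ! i, p ! (i + 1))) [0..<length p - 1]"
  have dcl: "distinct cl" using rb unfolding rainbow_def cl_def .
  have sub: "set cl \<subseteq> {1..K}"
  proof
    fix z assume "z \<in> set cl"
    then obtain i where i: "i < length p - 1" "z = c (p ! i, p ! (i + 1))" unfolding cl_def by auto
    have arc: "circulant_arc (m*m) {1, m+1} (p!i) (p!(i+1))" using dp i unfolding dipath_def by auto
    have "p!i \<in> circulant_vertices (m*m)" "p!(i+1) \<in> circulant_vertices (m*m)"
      using arc unfolding circulant_arc_def circulant_vertices_def by auto
    then show "z \<in> {1..K}" using ac arc i unfolding arc_colouring_def by auto
  qed
  have lc: "length cl = path_len p" unfolding cl_def path_len_def by simp
  have "card (set cl) \<le> card {1..K}" using sub by (intro card_mono) auto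
  then have "card (set cl) \<le> K" by simp
  moreover have "card (set cl) = length cl" using dcl by (rule distinct_card)
  ultimately show ?thesis using len lc by simp
qed

theorem main_m:
  assumes m2: "m \<ge> 2"
  shows "src_star (circulant_vertices (m*m)) (circulant_arc (m*m) {1, m+1}) = 2*m - 2
       \<and> rc_star (circulant_vertices (m*m)) (circulant_arc (m*m) {1, m+1}) = 2*m - 2"
proof
  show "src_star (circulant_vertices (m*m)) (circulant_arc (m*m) {1, m+1}) = 2*m - 2"
    unfolding src_star_def
  proof (rule Least_equality)
    show "\<exists>c. arc_colouring (circulant_vertices (m*m)) (circulant_arc (m*m) {1, m+1}) c (2*m - 2) \<and>
       strongly_rainbow_connected (circulant_vertices (m*m)) (circulant_arc (m*m) {1, m+1}) c"
      using colour_ok[OF m2] src_col[OF m2] by blast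
  next
    fix K assume "\<exists>c. arc_colouring (circulant_vertices (m*m)) (circulant_arc (m*m) {1, m+1}) c K \<and>
       strongly_rainbow_connected (circulant_vertices (m*m)) (circulant_arc (m*m) {1, m+1}) c"
    then obtain c where "arc_colouring (circulant_vertices (m*m)) (circulant_arc (m*m) {1, m+1}) c K"
      "strongly_rainbow_connected (circulant_vertices (m*m)) (circulant_arc (m*m) {1, m+1}) c" by blast
    moreover then have "rainbow_connected (circulant_vertices (m*m)) (circulant_arc (m*m) {1, m+1}) c"
      unfolding strongly_rainbow_connected_def rainbow_connected_def by blast
    ultimately show "2*m - 2 \<le> K" using lower[OF m2] by blast
  qed
  show "rc_star (circulant_vertices (m*m)) (circulant_arc (m*m) {1, m+1}) = 2*m - 2"
    unfolding rc_star_def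
  proof (rule Least_equality)
    have "rainbow_connected (circulant_vertices (m*m)) (circulant_arc (m*m) {1, m+1}) (col m)"
      using src_col[OF m2] unfolding strongly_rainbow_connected_def rainbow_connected_def by blast
    then show "\<exists>c. arc_colouring (circulant_vertices (m*m)) (circulant_arc (m*m) {1, m+1}) c (2*m - 2) \<and>
       rainbow_connected (circulant_vertices (m*m)) (circulant_arc (m*m) {1, m+1}) c"
      using colour_ok[OF m2] by blast
  next
    fix K assume "\<exists>c. arc_colouring (circulant_vertices (m*m)) (circulant_arc (m*m) {1, m+1}) c K \<and>
       rainbow_connected (circulant_vertices (m*m)) (circulant_arc (m*m) {1, m+1}) c"
    then show "2*m - 2 \<le> K" using lower[OF m2] by blast
  qed
qed

theorem theorem10:
  fixes k :: nat
  assumes "k \<ge> 3"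
  shows "src_star (circulant_vertices ((k - 1)^2)) (circulant_arc ((k - 1)^2) {1, k}) = 2 * k - 4
       \<and> rc_star (circulant_vertices ((k - 1)^2)) (circulant_arc ((k - 1)^2) {1, k}) = 2 * k - 4"
proof -
  have m2: "k - 1 \<ge> 2" using assms by simp
  have e1: "(k-1)^2 = (k-1)*(k-1)" by (simp add: power2_eq_square)
  have e2: "k = (k-1) + 1" using assms by simp
  have e3: "2*k - 4 = 2*(k-1) - 2" using assms by simp
  show ?thesis using main_m[OF m2] unfolding e1 e3 by (metis e2)
qed

end
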